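(* Fix $n$. The set $\mathcal{Q}=\mathcal{Q}(n)$ is closed under sums and products but is not closed under limits. The set $\mathcal{Q}'=\mathcal{Q}'(n)$ is closed under products but is not closed under limits.
   Context: Hermitian symmetric polynomials in $n$ variables: $r(z,\overline w)=\sum c_{\alpha\beta}z^\alpha\overline w^\beta$ with $c_{\alpha\beta}=\overline{c_{\beta\alpha}}$. $\mathcal{Q}(n)$: those $r$ with $r=\|F\|^2/\|G\|^2$ for holomorphic polynomial mappings $F,G$, $G\not\equiv0$. $\mathcal{Q}'(n)$: those $r$ with $r(z,\overline z)\ge0$ for all $z$ for which there exist a Hermitian symmetric $s\ge0$, not identically $0$, and a holomorphic polynomial mapping $F$ with $rs=\|F\|^2$. A set $\mathcal{S}$ of Hermitian symmetric polynomials is closed under limits if whenever $r_\lambda$, $\lambda$ in a closed set $K\subset\mathbb{R}^k$, is a family of Hermitian symmetric polynomials whose coefficient matrices depend continuously on $\lambda$, with $r_\lambda\in\mathcal{S}$, and $\lambda\to L\in K$, then $r_L\in\mathcal{S}$; "not closed under limits" means some such family has $r_\lambda\in\mathcal{S}$ for all $\lambda\ne L$ near $L$ (approaching $L$) but $r_L\notin\mathcal{S}$. *)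

theory Defs
  imports "HOL-Analysis.Analysis"
begin

text \<open>Variables z = (z_i) indexed by a finite type 'n (so n = CARD('n)).  A Hermitian polynomial r(z, conj w)
  = sum c_{alpha beta} z^alpha conj(w)^beta is represented by its coefficient
  function c.\<close>

type_synonym 'n mindex = "'n \<Rightarrow> nat"
type_synonym 'n hcoeffs = "'n mindex \<Rightarrow> 'n mindex \<Rightarrow> complex"
type_synonym 'n pcoeffs = "'n mindex \<Rightarrow> complex"

definition zmonom :: "('n::finite \<Rightarrow> complex) \<Rightarrow> 'n mindex \<Rightarrow> complex" where
  "zmonom z \<alpha> = (\<Prod>i\<in>UNIV. z i ^ \<alpha> i)"

definition hsupp :: "'n hcoeffs \<Rightarrow> ('n mindex \<times> 'n mindex) set" where
  "hsupp c = {(\<alpha>, \<beta>). c \<alpha> \<beta> \<noteq> 0}"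

definition is_herm :: "('n::finite) hcoeffs \<Rightarrow> bool" where
  "is_herm c \<longleftrightarrow> finite (hsupp c) \<and> (\<forall>\<alpha> \<beta>. c \<alpha> \<beta> = cnj (c \<beta> \<alpha>))"

definition heval :: "('n::finite) hcoeffs \<Rightarrow> ('n \<Rightarrow> complex) \<Rightarrow> ('n \<Rightarrow> complex) \<Rightarrow> complex" where
  "heval c z w = (\<Sum>(\<alpha>, \<beta>)\<in>hsupp c. c \<alpha> \<beta> * zmonom z \<alpha> * cnj (zmonom w \<beta>))"

definition is_hpoly :: "('n::finite) pcoeffs \<Rightarrow> bool" where
  "is_hpoly f \<longleftrightarrow> finite {\<alpha>. f \<alpha> \<noteq> 0}"

definition peval :: "('n::finite) pcoeffs \<Rightarrow> ('n \<Rightarrow> complex) \<Rightarrow> complex" where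
  "peval f z = (\<Sum>\<alpha>\<in>{\<alpha>. f \<alpha> \<noteq> 0}. f \<alpha> * zmonom z \<alpha>)"

text \<open>Holomorphic polynomial mappings C^n -> C^N as lists of component polynomials.\<close>
definition is_hpmap :: "('n::finite) pcoeffs list \<Rightarrow> bool" where
  "is_hpmap F \<longleftrightarrow> (\<forall>f\<in>set F. is_hpoly f)"

definition hpmap_nonzero :: "('n::finite) pcoeffs list \<Rightarrow> bool" where
  "hpmap_nonzero G \<longleftrightarrow> (\<exists>f\<in>set G. \<exists>\<alpha>. f \<alpha> \<noteq> 0)"

text \<open>||F||^2 polarized: sum_j F_j(z) conj(F_j(w))\<close>
definition normsq :: "('n::finite) pcoeffs list \<Rightarrow> ('n \<Rightarrow> complex) \<Rightarrow> ('n \<Rightarrow> complex) \<Rightarrow> complex" where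
  "normsq F z w = (\<Sum>f\<leftarrow>F. peval f z * cnj (peval f w))"

definition hsum :: "('n::finite) hcoeffs \<Rightarrow> 'n hcoeffs \<Rightarrow> 'n hcoeffs" where
  "hsum c d = (\<lambda>\<alpha> \<beta>. c \<alpha> \<beta> + d \<alpha> \<beta>)"

definition hprod :: "('n::finite) hcoeffs \<Rightarrow> 'n hcoeffs \<Rightarrow> 'n hcoeffs" where
  "hprod c d = (\<lambda>\<gamma> \<delta>. \<Sum>(\<alpha>, \<beta>)\<in>hsupp c. \<Sum>(\<alpha>', \<beta>')\<in>hsupp d.
      if (\<lambda>i. \<alpha> i + \<alpha>' i) = \<gamma> \<and> (\<lambda>i. \<beta> i + \<beta>' i) = \<delta> then c \<alpha> \<beta> * d \<alpha>' \<beta>' else 0)"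

text \<open>Q(n): r = ||F||^2/||G||^2 as rational functions, i.e. r ||G||^2 = ||F||^2
  as polynomials in (z, conj w), with G not identically zero.\<close>
definition inQ :: "('n::finite) hcoeffs \<Rightarrow> bool" where
  "inQ r \<longleftrightarrow> is_herm r \<and> (\<exists>F G. is_hpmap F \<and> is_hpmap G \<and> hpmap_nonzero G \<and>
      (\<forall>z w. heval r z w * normsq G z w = normsq F z w))"

definition inQ' :: "('n::finite) hcoeffs \<Rightarrow> bool" where
  "inQ' r \<longleftrightarrow> is_herm r \<and> (\<forall>z. 0 \<le> Re (heval r z z)) \<and>
     (\<exists>s F. is_herm s \<and> (\<forall>z. 0 \<le> Re (heval s z z)) \<and> (\<exists>\<alpha> \<beta>. s \<alpha> \<beta> \<noteq> 0) \<and>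
        is_hpmap F \<and> (\<forall>z w. heval r z w * heval s z w = normsq F z w))"

text \<open>Not closed under limits: there are k, a closed set K in R^k (points of R^k are
  represented as sequences nat => real vanishing from index k on, with the product
  topology, which on this subspace is the Euclidean one), a family of Hermitian
  polynomials r_lambda whose coefficient matrices (of a fixed finite size D) depend
  continuously on lambda in K, and a limit point L of K, such that r_lambda is in S for
  all lambda \<noteq> L near L in K, but r_L is not in S.\<close>
definition not_closed_under_limits :: "(('n::finite) hcoeffs \<Rightarrow> bool) \<Rightarrow> bool" where
  "not_closed_under_limits S \<longleftrightarrow>
    (\<exists>(k::nat) (K::(nat \<Rightarrow> real) set) (r::(nat \<Rightarrow> real) \<Rightarrow> 'n hcoeffs) L D.
       closed K \<and> K \<subseteq> {x. \<forall>i\<ge>k. x i = 0} \<and> finite D \<and>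
       (\<forall>t\<in>K. is_herm (r t) \<and> hsupp (r t) \<subseteq> D) \<and>
       (\<forall>\<alpha> \<beta>. continuous_on K (\<lambda>t. r t \<alpha> \<beta>)) \<and>
       L \<in> K \<and> L islimpt K \<and>
       eventually (\<lambda>t. S (r t)) (at L within K) \<and> \<not> S (r L))"

definition closed_under_sums :: "(('n::finite) hcoeffs \<Rightarrow> bool) \<Rightarrow> bool" where
  "closed_under_sums S \<longleftrightarrow> (\<forall>c d. S c \<longrightarrow> S d \<longrightarrow> S (hsum c d))"

definition closed_under_products :: "(('n::finite) hcoeffs \<Rightarrow> bool) \<Rightarrow> bool" where
  "closed_under_products S \<longleftrightarrow> (\<forall>c d. S c \<longrightarrow> S d \<longrightarrow> S (hprod c d))"

end

theory Submission
  imports Defs "HOL-Computational_Algebra.Polynomial"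
begin


lemma zmonom_add: "zmonom z (\<lambda>i. a i + b i) = zmonom z a * zmonom z b"
  by (simp add: zmonom_def power_add prod.distrib)

lemma heval_superset:
  assumes "finite A" "hsupp c \<subseteq> A"
  shows "heval c z w = (\<Sum>p\<in>A. c (fst p) (snd p) * zmonom z (fst p) * cnj (zmonom w (snd p)))"
  unfolding heval_def split_def
  by (rule sum.mono_neutral_left[OF assms(1) assms(2)]) (auto simp: hsupp_def)

lemma peval_superset:
  assumes "finite A" "{\<alpha>. f \<alpha> \<noteq> 0} \<subseteq> A"
  shows "peval f z = (\<Sum>\<alpha>\<in>A. f \<alpha> * zmonom z \<alpha>)"
  unfolding peval_def
  by (rule sum.mono_neutral_left[OF assms(1) assms(2)]) auto


lemma herm_fin: "is_herm c \<Longrightarrow> finite (hsupp c)" unfolding is_herm_def by blast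
lemma herm_sym: "is_herm c \<Longrightarrow> c a b = cnj (c b a)" unfolding is_herm_def by blast

lemma hsum_herm: "is_herm c \<Longrightarrow> is_herm d \<Longrightarrow> is_herm (hsum c d)"
proof -
  assume a: "is_herm c" "is_herm d"
  have sub: "hsupp (hsum c d) \<subseteq> hsupp c \<union> hsupp d" by (auto simp: hsupp_def hsum_def)
  have "finite (hsupp c \<union> hsupp d)" using a unfolding is_herm_def by blast
  then have "finite (hsupp (hsum c d))" using sub by (rule finite_subset[rotated])
  moreover have "\<forall>\<alpha> \<beta>. hsum c d \<alpha> \<beta> = cnj (hsum c d \<beta> \<alpha>)"
    using a unfolding is_herm_def hsum_def by (metis complex_cnj_add)
  ultimately show ?thesis unfolding is_herm_def by blast
qed

lemma hsum_eval: "is_herm c \<Longrightarrow> is_herm d \<Longrightarrow> heval (hsum c d) z w = heval c z w + heval d z w"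
proof -
  assume a: "is_herm c" "is_herm d"
  let ?A = "hsupp c \<union> hsupp d"
  have f: "finite ?A" using a by (simp add: herm_fin)
  have s1: "hsupp (hsum c d) \<subseteq> ?A" by (auto simp: hsupp_def hsum_def)
  have "heval (hsum c d) z w = (\<Sum>p\<in>?A. hsum c d (fst p) (snd p) * zmonom z (fst p) * cnj (zmonom w (snd p)))"
    by (rule heval_superset[OF f s1])
  also have "\<dots> = (\<Sum>p\<in>?A. c (fst p) (snd p) * zmonom z (fst p) * cnj (zmonom w (snd p)))
     + (\<Sum>p\<in>?A. d (fst p) (snd p) * zmonom z (fst p) * cnj (zmonom w (snd p)))"
    unfolding hsum_def sum.distrib[symmetric] by (rule sum.cong) (auto simp: algebra_simps)
  also have "\<dots> = heval c z w + heval d z w"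
    using heval_superset[OF f, of c] heval_superset[OF f, of d] by auto
  finally show ?thesis .
qed

definition hsig :: "('n mindex \<times> 'n mindex) \<Rightarrow> ('n mindex \<times> 'n mindex) \<Rightarrow> ('n mindex \<times> 'n mindex)" where
  "hsig p q = ((\<lambda>i. fst p i + fst q i), (\<lambda>i. snd p i + snd q i))"

lemma hprod_alt: "hprod c d \<gamma> \<delta> = (\<Sum>p\<in>hsupp c. \<Sum>q\<in>hsupp d.
   if hsig p q = (\<gamma>, \<delta>) then c (fst p) (snd p) * d (fst q) (snd q) else 0)"
  unfolding hprod_def hsig_def split_def prod.inject by (rule refl)

lemma hprod_supp: "hsupp (hprod c d) \<subseteq> (\<lambda>(p,q). hsig p q) ` (hsupp c \<times> hsupp d)"
proof
  fix u assume "u \<in> hsupp (hprod c d)"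
  then have h: "hprod c d (fst u) (snd u) \<noteq> 0" by (simp add: hsupp_def split_def)
  obtain p where p: "p \<in> hsupp c" and h2: "(\<Sum>q\<in>hsupp d.
   if hsig p q = (fst u, snd u) then c (fst p) (snd p) * d (fst q) (snd q) else 0) \<noteq> 0"
    using sum.not_neutral_contains_not_neutral[OF h[unfolded hprod_alt]] by blast
  obtain q where q: "q \<in> hsupp d" and h3: "(if hsig p q = (fst u, snd u) then c (fst p) (snd p) * d (fst q) (snd q) else 0) \<noteq> 0"
    using sum.not_neutral_contains_not_neutral[OF h2] by blast
  from h3 have "hsig p q = u" by (cases "hsig p q = (fst u, snd u)") auto
  then have "u = (\<lambda>(p,q). hsig p q) (p,q)" by simp
  moreover have "(p,q) \<in> hsupp c \<times> hsupp d" using p q by simp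
  ultimately show "u \<in> (\<lambda>(p,q). hsig p q) ` (hsupp c \<times> hsupp d)" by (rule image_eqI)
qed

lemma hprod_finite: "is_herm c \<Longrightarrow> is_herm d \<Longrightarrow> finite (hsupp (hprod c d))"
  by (rule finite_subset[OF hprod_supp]) (simp add: herm_fin)

lemma hprod_eval:
  assumes a: "is_herm c" "is_herm d"
  shows "heval (hprod c d) z w = heval c z w * heval d z w"
proof -
  let ?S = "hsupp c" and ?T = "hsupp d"
  let ?U = "(\<lambda>(p,q). hsig p q) ` (?S \<times> ?T)"
  have fS: "finite ?S" and fT: "finite ?T" using a by (simp_all add: herm_fin)
  have fU: "finite ?U" using fS fT by auto
  define m where "m = (\<lambda>u. zmonom z (fst u) * cnj (zmonom w (snd u)))"
  have "heval (hprod c d) z w = (\<Sum>u\<in>?U. hprod c d (fst u) (snd u) * zmonom z (fst u) * cnj (zmonom w (snd u)))"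
    by (rule heval_superset[OF fU hprod_supp])
  also have "\<dots> = (\<Sum>u\<in>?U. \<Sum>p\<in>?S. \<Sum>q\<in>?T. if u = hsig p q then c (fst p) (snd p) * d (fst q) (snd q) * m u else 0)"
    unfolding hprod_alt m_def
    by (rule sum.cong[OF refl]) (auto simp: sum_distrib_right intro!: sum.cong)
  also have "\<dots> = (\<Sum>p\<in>?S. \<Sum>q\<in>?T. \<Sum>u\<in>?U. if u = hsig p q then c (fst p) (snd p) * d (fst q) (snd q) * m u else 0)"
    by (subst sum.swap) (simp add: sum.swap[of _ ?T ?U])
  also have "\<dots> = (\<Sum>p\<in>?S. \<Sum>q\<in>?T. c (fst p) (snd p) * d (fst q) (snd q) * m (hsig p q))"
  proof (rule sum.cong[OF refl], rule sum.cong[OF refl])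
    fix p q assume "p \<in> ?S" "q \<in> ?T"
    then have "hsig p q \<in> ?U" by force
    then show "(\<Sum>u\<in>?U. if u = hsig p q then c (fst p) (snd p) * d (fst q) (snd q) * m u else 0)
       = c (fst p) (snd p) * d (fst q) (snd q) * m (hsig p q)"
      using fU by (simp add: sum.delta')
  qed
  also have "\<dots> = (\<Sum>p\<in>?S. \<Sum>q\<in>?T. (c (fst p) (snd p) * zmonom z (fst p) * cnj (zmonom w (snd p)))
        * (d (fst q) (snd q) * zmonom z (fst q) * cnj (zmonom w (snd q))))"
    by (rule sum.cong[OF refl], rule sum.cong[OF refl])
      (simp add: m_def hsig_def zmonom_add)
  also have "\<dots> = heval c z w * heval d z w"
    using heval_superset[OF fS order_refl, of z w] heval_superset[OF fT order_refl, of z w]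
    by (simp add: sum_product)
  finally show ?thesis .
qed



lemma swap_in_hsupp: "is_herm c \<Longrightarrow> p \<in> hsupp c \<Longrightarrow> prod.swap p \<in> hsupp c"
  using herm_sym[of c "snd p" "fst p"] by (auto simp: hsupp_def split_def)

lemma sum_swap_hsupp: "is_herm c \<Longrightarrow> (\<Sum>p\<in>hsupp c. f (prod.swap p)) = (\<Sum>p\<in>hsupp c. f p)"
  by (rule sum.reindex_bij_witness[of _ prod.swap prod.swap]) (auto intro: swap_in_hsupp)

lemma hsig_swap: "hsig (prod.swap p) (prod.swap q) = prod.swap (hsig p q)"
  by (simp add: hsig_def)

lemma hprod_herm:
  assumes a: "is_herm c" "is_herm d"
  shows "is_herm (hprod c d)"
proof -
  have "hprod c d \<gamma> \<delta> = cnj (hprod c d \<delta> \<gamma>)" for \<gamma> \<delta>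
  proof -
    define g where "g = (\<lambda>p q. if hsig p q = (\<gamma>, \<delta>) then c (fst p) (snd p) * d (fst q) (snd q) else 0)"
    have "cnj (hprod c d \<delta> \<gamma>) = (\<Sum>p\<in>hsupp c. \<Sum>q\<in>hsupp d. g (prod.swap p) (prod.swap q))"
      unfolding hprod_alt cnj_sum
    proof (rule sum.cong[OF refl], rule sum.cong[OF refl])
      fix p q
      have e: "(hsig p q = (\<delta>, \<gamma>)) = (hsig (prod.swap p) (prod.swap q) = (\<gamma>, \<delta>))"
        unfolding hsig_swap by (cases "hsig p q") auto
      show "cnj (if hsig p q = (\<delta>, \<gamma>) then c (fst p) (snd p) * d (fst q) (snd q) else 0) =
            g (prod.swap p) (prod.swap q)"
        unfolding g_def e using herm_sym[OF a(1), of "snd p" "fst p"] herm_sym[OF a(2), of "snd q" "fst q"]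
        by simp
    qed
    also have "\<dots> = (\<Sum>p\<in>hsupp c. \<Sum>q\<in>hsupp d. g (prod.swap p) q)"
      by (rule sum.cong[OF refl]) (rule sum_swap_hsupp[OF a(2), of "\<lambda>q. g (prod.swap _) q"])
    also have "\<dots> = (\<Sum>p\<in>hsupp c. \<Sum>q\<in>hsupp d. g p q)"
      by (rule sum_swap_hsupp[OF a(1), of "\<lambda>p. \<Sum>q\<in>hsupp d. g p q"])
    also have "\<dots> = hprod c d \<gamma> \<delta>" unfolding hprod_alt g_def ..
    finally show ?thesis by simp
  qed
  then show ?thesis unfolding is_herm_def using hprod_finite[OF a] by blast
qed

lemma heval_diag_real:
  assumes a: "is_herm c"
  shows "cnj (heval c z z) = heval c z z"
proof -
  have "cnj (heval c z z) = (\<Sum>p\<in>hsupp c. cnj (c (fst p) (snd p) * zmonom z (fst p) * cnj (zmonom z (snd p))))"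
    unfolding heval_def split_def by simp
  also have "\<dots> = (\<Sum>p\<in>hsupp c. (\<lambda>p. c (fst p) (snd p) * zmonom z (fst p) * cnj (zmonom z (snd p))) (prod.swap p))"
  proof (rule sum.cong[OF refl])
    fix p :: "'a mindex \<times> 'a mindex"
    have e: "c (snd p) (fst p) = cnj (c (fst p) (snd p))" by (rule herm_sym[OF a])
    show "cnj (c (fst p) (snd p) * zmonom z (fst p) * cnj (zmonom z (snd p))) =
      (\<lambda>p. c (fst p) (snd p) * zmonom z (fst p) * cnj (zmonom z (snd p))) (prod.swap p)"
      by (simp add: e)
  qed
  also have "\<dots> = (\<Sum>p\<in>hsupp c. (\<lambda>p. c (fst p) (snd p) * zmonom z (fst p) * cnj (zmonom z (snd p))) p)"
    by (rule sum_swap_hsupp[OF a])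
  also have "\<dots> = heval c z z" by (simp add: heval_def split_def)
  finally show ?thesis .
qed

lemma heval_diag_Re: "is_herm c \<Longrightarrow> heval c z z = of_real (Re (heval c z z))"
proof -
  assume a: "is_herm c"
  have "Im (heval c z z) = 0" using arg_cong[OF heval_diag_real[OF a, of z], of Im] by simp
  then show ?thesis by (simp add: complex_eq_iff)
qed

definition pmul :: "('n::finite) pcoeffs \<Rightarrow> 'n pcoeffs \<Rightarrow> 'n pcoeffs" where
  "pmul f g = (\<lambda>\<gamma>. \<Sum>\<alpha>\<in>{\<alpha>. f \<alpha> \<noteq> 0}. \<Sum>\<beta>\<in>{\<beta>. g \<beta> \<noteq> 0}.
      if (\<lambda>i. \<alpha> i + \<beta> i) = \<gamma> then f \<alpha> * g \<beta> else 0)"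

lemma pmul_supp: "{\<gamma>. pmul f g \<gamma> \<noteq> 0} \<subseteq> (\<lambda>(\<alpha>,\<beta>). (\<lambda>i. \<alpha> i + \<beta> i)) ` ({\<alpha>. f \<alpha> \<noteq> 0} \<times> {\<beta>. g \<beta> \<noteq> 0})"
proof
  fix u assume "u \<in> {\<gamma>. pmul f g \<gamma> \<noteq> 0}"
  then have h: "pmul f g u \<noteq> 0" by simp
  obtain p where p: "p \<in> {\<alpha>. f \<alpha> \<noteq> 0}" and h2: "(\<Sum>\<beta>\<in>{\<beta>. g \<beta> \<noteq> 0}.
      if (\<lambda>i. p i + \<beta> i) = u then f p * g \<beta> else 0) \<noteq> 0"
    using sum.not_neutral_contains_not_neutral[OF h[unfolded pmul_def]] by blast
  obtain q where q: "q \<in> {\<beta>. g \<beta> \<noteq> 0}" and h3: "(if (\<lambda>i. p i + q i) = u then f p * g q else 0) \<noteq> 0"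
    using sum.not_neutral_contains_not_neutral[OF h2] by blast
  from h3 have "(\<lambda>i. p i + q i) = u" by (cases "(\<lambda>i. p i + q i) = u") auto
  then have "u = (\<lambda>(\<alpha>,\<beta>). (\<lambda>i. \<alpha> i + \<beta> i)) (p,q)" by simp
  moreover have "(p,q) \<in> {\<alpha>. f \<alpha> \<noteq> 0} \<times> {\<beta>. g \<beta> \<noteq> 0}" using p q by simp
  ultimately show "u \<in> (\<lambda>(\<alpha>,\<beta>). (\<lambda>i. \<alpha> i + \<beta> i)) ` ({\<alpha>. f \<alpha> \<noteq> 0} \<times> {\<beta>. g \<beta> \<noteq> 0})"
    by (rule image_eqI)
qed

lemma pmul_poly: "is_hpoly f \<Longrightarrow> is_hpoly g \<Longrightarrow> is_hpoly (pmul f g)"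
  unfolding is_hpoly_def by (rule finite_subset[OF pmul_supp]) simp

lemma pmul_eval:
  assumes a: "is_hpoly f" "is_hpoly g"
  shows "peval (pmul f g) z = peval f z * peval g z"
proof -
  let ?S = "{\<alpha>. f \<alpha> \<noteq> 0}" and ?T = "{\<beta>. g \<beta> \<noteq> 0}"
  let ?U = "(\<lambda>(\<alpha>,\<beta>). (\<lambda>i. \<alpha> i + \<beta> i)) ` (?S \<times> ?T)"
  have fS: "finite ?S" and fT: "finite ?T" using a by (simp_all add: is_hpoly_def)
  have fU: "finite ?U" using fS fT by auto
  have "peval (pmul f g) z = (\<Sum>u\<in>?U. pmul f g u * zmonom z u)"
    by (rule peval_superset[OF fU pmul_supp])
  also have "\<dots> = (\<Sum>u\<in>?U. \<Sum>p\<in>?S. \<Sum>q\<in>?T. if u = (\<lambda>i. p i + q i) then f p * g q * zmonom z u else 0)"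
    unfolding pmul_def
    by (rule sum.cong[OF refl]) (auto simp: sum_distrib_right intro!: sum.cong)
  also have "\<dots> = (\<Sum>p\<in>?S. \<Sum>q\<in>?T. \<Sum>u\<in>?U. if u = (\<lambda>i. p i + q i) then f p * g q * zmonom z u else 0)"
    by (subst sum.swap) (simp add: sum.swap[of _ ?T ?U])
  also have "\<dots> = (\<Sum>p\<in>?S. \<Sum>q\<in>?T. f p * g q * zmonom z (\<lambda>i. p i + q i))"
  proof (rule sum.cong[OF refl], rule sum.cong[OF refl])
    fix p q assume "p \<in> ?S" "q \<in> ?T"
    then have "(\<lambda>i. p i + q i) \<in> ?U" by force
    then show "(\<Sum>u\<in>?U. if u = (\<lambda>i. p i + q i) then f p * g q * zmonom z u else 0)
       = f p * g q * zmonom z (\<lambda>i. p i + q i)"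
      using fU by (simp add: sum.delta')
  qed
  also have "\<dots> = (\<Sum>p\<in>?S. \<Sum>q\<in>?T. (f p * zmonom z p) * (g q * zmonom z q))"
    by (rule sum.cong[OF refl], rule sum.cong[OF refl]) (simp add: zmonom_add)
  also have "\<dots> = peval f z * peval g z"
    unfolding peval_def by (simp add: sum_product)
  finally show ?thesis .
qed

definition tens :: "('n::finite) pcoeffs list \<Rightarrow> 'n pcoeffs list \<Rightarrow> 'n pcoeffs list" where
  "tens F H = concat (map (\<lambda>f. map (\<lambda>h. pmul f h) H) F)"

lemma tens_map: "is_hpmap F \<Longrightarrow> is_hpmap H \<Longrightarrow> is_hpmap (tens F H)"
  unfolding is_hpmap_def tens_def by (auto intro: pmul_poly)

lemma normsq_append: "normsq (F @ H) z w = normsq F z w + normsq H z w"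
  by (simp add: normsq_def)

lemma normsq_tens:
  assumes "is_hpmap F" "is_hpmap H"
  shows "normsq (tens F H) z w = normsq F z w * normsq H z w"
  using assms
proof (induction F)
  case Nil
  then show ?case by (simp add: normsq_def tens_def)
next
  case (Cons f F)
  have pf: "is_hpoly f" and pF: "is_hpmap F" using Cons.prems by (auto simp: is_hpmap_def)
  have hH: "\<And>h. h \<in> set H \<Longrightarrow> is_hpoly h" using Cons.prems by (auto simp: is_hpmap_def)
  have "tens (f # F) H = map (\<lambda>h. pmul f h) H @ tens F H" by (simp add: tens_def)
  then have "normsq (tens (f # F) H) z w = normsq (map (\<lambda>h. pmul f h) H) z w + normsq F z w * normsq H z w"
    using Cons.IH[OF pF Cons.prems(2)] by (simp only: normsq_append)
  also have "normsq (map (\<lambda>h. pmul f h) H) z w = peval f z * cnj (peval f w) * normsq H z w"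
    unfolding normsq_def
    using hH
  proof (induction H)
    case Nil then show ?case by simp
  next
    case (Cons h H) then show ?case by (simp add: pmul_eval[OF pf] algebra_simps)
  qed
  finally show ?case by (simp add: normsq_def algebra_simps)
qed




definition crv :: "nat \<Rightarrow> ('m \<Rightarrow> nat) \<Rightarrow> complex \<Rightarrow> ('m::finite \<Rightarrow> complex)" where
  "crv B idx t = (\<lambda>i. t ^ (B ^ idx i))"

definition wt :: "nat \<Rightarrow> ('m \<Rightarrow> nat) \<Rightarrow> ('m::finite \<Rightarrow> nat) \<Rightarrow> nat" where
  "wt B idx \<alpha> = (\<Sum>i\<in>UNIV. \<alpha> i * B ^ idx i)"

lemma zmonom_crv: "zmonom (crv B idx t) \<alpha> = t ^ wt B idx \<alpha>"
  unfolding zmonom_def crv_def wt_def power_sum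
  by (rule prod.cong[OF refl]) (simp add: power_mult[symmetric] mult.commute)

lemma digits_inj:
  "(\<forall>k<N. a k < B) \<Longrightarrow> (\<forall>k<N. b k < B) \<Longrightarrow> (\<Sum>k<N. a k * B ^ k) = (\<Sum>k<N. b k * B ^ k)
   \<Longrightarrow> k < N \<Longrightarrow> a k = (b k :: nat)"
proof (induction N arbitrary: a b k)
  case 0 then show ?case by simp
next
  case (Suc N)
  have sh: "\<And>c. (\<Sum>k<Suc N. c k * B ^ k) = c 0 + B * (\<Sum>k<N. c (Suc k) * B ^ k)"
    unfolding sum.lessThan_Suc_shift by (simp add: sum_distrib_left algebra_simps)
  have a0: "a 0 < B" and b0: "b 0 < B" using Suc.prems by auto
  have eq: "a 0 + B * (\<Sum>k<N. a (Suc k) * B ^ k) = b 0 + B * (\<Sum>k<N. b (Suc k) * B ^ k)"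
    using Suc.prems(3) sh by metis
  have "(a 0 + B * (\<Sum>k<N. a (Suc k) * B ^ k)) mod B = a 0" using a0 by simp
  moreover have "(b 0 + B * (\<Sum>k<N. b (Suc k) * B ^ k)) mod B = b 0" using b0 by simp
  ultimately have e0: "a 0 = b 0" using eq by metis
  then have "B * (\<Sum>k<N. a (Suc k) * B ^ k) = B * (\<Sum>k<N. b (Suc k) * B ^ k)" using eq by simp
  then have e1: "(\<Sum>k<N. a (Suc k) * B ^ k) = (\<Sum>k<N. b (Suc k) * B ^ k)" using a0 by simp
  show ?case
  proof (cases k)
    case 0 then show ?thesis using e0 by simp
  next
    case (Suc k')
    then show ?thesis using Suc.IH[of "\<lambda>k. a (Suc k)" "\<lambda>k. b (Suc k)" k'] Suc.prems e1 by auto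
  qed
qed

lemma wt_inj:
  fixes \<alpha> \<beta> :: "'m::finite \<Rightarrow> nat"
  assumes bij: "bij_betw idx UNIV {..<CARD('m)}" and a: "\<forall>i. \<alpha> i < B" and b: "\<forall>i. \<beta> i < B"
    and e: "wt B idx \<alpha> = wt B idx \<beta>"
  shows "\<alpha> = \<beta>"
proof -
  define g where "g = inv_into UNIV idx"
  have inj: "inj idx" using bij by (simp add: bij_betw_def)
  have gi: "g (idx i) = i" for i unfolding g_def using inj by simp
  have re: "wt B idx \<gamma> = (\<Sum>k<CARD('m). \<gamma> (g k) * B ^ k)" for \<gamma> :: "'m \<Rightarrow> nat"
    unfolding wt_def using sum.reindex_bij_betw[OF bij, of "\<lambda>k. \<gamma> (g k) * B ^ k"] gi by simp
  have "\<alpha> (g k) = \<beta> (g k)" if "k < CARD('m)" for k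
    using digits_inj[of "CARD('m)" "\<lambda>k. \<alpha> (g k)" B "\<lambda>k. \<beta> (g k)" k] a b e re that by auto
  moreover have "idx i < CARD('m)" for i using bij by (auto simp: bij_betw_def)
  ultimately show ?thesis using gi by (metis ext)
qed

lemma kron_finite_roots:
  fixes f :: "'m::finite pcoeffs"
  assumes hp: "is_hpoly f" and bij: "bij_betw idx UNIV {..<CARD('m)}"
    and bd: "\<forall>\<alpha>. f \<alpha> \<noteq> 0 \<longrightarrow> (\<forall>i. \<alpha> i < B)" and nz: "f \<alpha>0 \<noteq> 0"
  shows "finite {t. peval f (crv B idx t) = 0}"
proof -
  let ?S = "{\<alpha>. f \<alpha> \<noteq> 0}"
  define P where "P = (\<Sum>\<alpha>\<in>?S. monom (f \<alpha>) (wt B idx \<alpha>))"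
  have ev: "poly P t = peval f (crv B idx t)" for t
    unfolding P_def poly_sum peval_def zmonom_crv by (simp add: poly_monom)
  have "coeff P (wt B idx \<alpha>0) = (\<Sum>\<alpha>\<in>?S. if \<alpha> = \<alpha>0 then f \<alpha> else 0)"
    unfolding P_def coeff_sum coeff_monom
  proof (rule sum.cong[OF refl])
    fix \<alpha> assume "\<alpha> \<in> ?S"
    then have "(wt B idx \<alpha> = wt B idx \<alpha>0) = (\<alpha> = \<alpha>0)"
      using wt_inj[OF bij, of \<alpha> B \<alpha>0] bd nz by auto
    then show "(if wt B idx \<alpha> = wt B idx \<alpha>0 then f \<alpha> else 0) = (if \<alpha> = \<alpha>0 then f \<alpha> else 0)" by simp
  qed
  also have "\<dots> = f \<alpha>0" using hp nz by (simp add: is_hpoly_def sum.delta')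
  finally have "P \<noteq> 0" using nz by auto
  then have "finite {t. poly P t = 0}" by (rule poly_roots_finite)
  then show ?thesis using ev by simp
qed

lemma kron_zero:
  fixes f :: "'m::finite pcoeffs"
  assumes hp: "is_hpoly f" and bij: "bij_betw idx UNIV {..<CARD('m)}"
    and bd: "\<forall>\<alpha>. f \<alpha> \<noteq> 0 \<longrightarrow> (\<forall>i. \<alpha> i < B)" and T: "infinite T"
    and z: "\<forall>t\<in>T. peval f (crv B idx t) = 0"
  shows "f \<alpha> = 0"
proof (rule ccontr)
  assume "f \<alpha> \<noteq> 0"
  from kron_finite_roots[OF hp bij bd this] have "finite {t. peval f (crv B idx t) = 0}" .
  moreover have "T \<subseteq> {t. peval f (crv B idx t) = 0}" using z by auto
  ultimately show False using T finite_subset by blast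
qed

lemma ex_idx: "\<exists>idx. bij_betw idx (UNIV :: 'm::finite set) {..<CARD('m)}"
  using ex_bij_betw_finite_nat[of "UNIV :: 'm set"] by (simp add: atLeast0LessThan)

definition bnd :: "(('m::finite) \<Rightarrow> nat) set \<Rightarrow> nat" where
  "bnd S = Suc (\<Sum>\<alpha>\<in>S. \<Sum>i\<in>UNIV. \<alpha> i)"

lemma bnd_le: "finite S \<Longrightarrow> \<alpha> \<in> S \<Longrightarrow> \<alpha> i < bnd S"
proof -
  assume f: "finite S" and a: "\<alpha> \<in> S"
  have "\<alpha> i \<le> (\<Sum>i\<in>UNIV. \<alpha> i)" by (rule member_le_sum) auto
  also have "\<dots> \<le> (\<Sum>\<alpha>\<in>S. \<Sum>i\<in>UNIV. \<alpha> i)" by (rule member_le_sum[OF a]) (auto simp: f)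
  finally show ?thesis unfolding bnd_def by simp
qed

lemma two_nonzero:
  fixes f g :: "'m::finite pcoeffs"
  assumes "is_hpoly f" "is_hpoly g" "f a \<noteq> 0" "g b \<noteq> 0"
  shows "\<exists>z. peval f z \<noteq> 0 \<and> peval g z \<noteq> 0"
proof -
  obtain idx where bij: "bij_betw idx (UNIV :: 'm set) {..<CARD('m)}" using ex_idx by blast
  let ?S = "{\<alpha>. f \<alpha> \<noteq> 0} \<union> {\<alpha>. g \<alpha> \<noteq> 0}"
  have fS: "finite ?S" using assms by (simp add: is_hpoly_def)
  define B where "B = bnd ?S"
  have bf: "\<forall>\<alpha>. f \<alpha> \<noteq> 0 \<longrightarrow> (\<forall>i. \<alpha> i < B)" and bg: "\<forall>\<alpha>. g \<alpha> \<noteq> 0 \<longrightarrow> (\<forall>i. \<alpha> i < B)"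
    unfolding B_def using bnd_le[OF fS] by auto
  have "finite ({t. peval f (crv B idx t) = 0} \<union> {t. peval g (crv B idx t) = 0})"
    using kron_finite_roots[OF assms(1) bij bf assms(3)] kron_finite_roots[OF assms(2) bij bg assms(4)] by simp
  then obtain t where "t \<notin> {t. peval f (crv B idx t) = 0} \<union> {t. peval g (crv B idx t) = 0}"
    using ex_new_if_finite[OF infinite_UNIV_char_0] by blast
  then show ?thesis by auto
qed




definition tocomb :: "('n::finite) hcoeffs \<Rightarrow> ('n + 'n) pcoeffs" where
  "tocomb c = (\<lambda>\<gamma>. c (\<gamma> \<circ> Inl) (\<gamma> \<circ> Inr))"

definition comb :: "('n::finite \<Rightarrow> complex) \<Rightarrow> ('n \<Rightarrow> complex) \<Rightarrow> ('n + 'n \<Rightarrow> complex)" where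
  "comb z w = case_sum z (\<lambda>i. cnj (w i))"

lemma zmonom_comb: "zmonom (comb z w) \<gamma> = zmonom z (\<gamma> \<circ> Inl) * cnj (zmonom w (\<gamma> \<circ> Inr))"
proof -
  have "zmonom (comb z w) \<gamma> = (\<Prod>x\<in>UNIV <+> UNIV. comb z w x ^ \<gamma> x)"
    unfolding zmonom_def by simp
  also have "\<dots> = (\<Prod>x\<in>UNIV. comb z w (Inl x) ^ \<gamma> (Inl x)) * (\<Prod>x\<in>UNIV. comb z w (Inr x) ^ \<gamma> (Inr x))"
    by (subst prod.Plus) (simp_all add: o_def)
  also have "\<dots> = zmonom z (\<gamma> \<circ> Inl) * cnj (zmonom w (\<gamma> \<circ> Inr))"
    by (simp add: zmonom_def comb_def)
  finally show ?thesis .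
qed

lemma case_sum_split: "case_sum (\<gamma> \<circ> Inl) (\<gamma> \<circ> Inr) = \<gamma>"
  by (rule ext) (simp split: sum.split)

lemma tocomb_supp: "{\<gamma>. tocomb c \<gamma> \<noteq> 0} = (\<lambda>p. case_sum (fst p) (snd p)) ` hsupp c"
proof
  show "{\<gamma>. tocomb c \<gamma> \<noteq> 0} \<subseteq> (\<lambda>p. case_sum (fst p) (snd p)) ` hsupp c"
  proof
    fix \<gamma> assume "\<gamma> \<in> {\<gamma>. tocomb c \<gamma> \<noteq> 0}"
    then have "(\<gamma> \<circ> Inl, \<gamma> \<circ> Inr) \<in> hsupp c" by (simp add: tocomb_def hsupp_def)
    moreover have "\<gamma> = (\<lambda>p. case_sum (fst p) (snd p)) (\<gamma> \<circ> Inl, \<gamma> \<circ> Inr)" by (simp add: case_sum_split)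
    ultimately show "\<gamma> \<in> (\<lambda>p. case_sum (fst p) (snd p)) ` hsupp c" by (rule rev_image_eqI)
  qed
next
  show "(\<lambda>p. case_sum (fst p) (snd p)) ` hsupp c \<subseteq> {\<gamma>. tocomb c \<gamma> \<noteq> 0}"
    by (auto simp: tocomb_def hsupp_def o_def)
qed

lemma tocomb_poly: "is_herm c \<Longrightarrow> is_hpoly (tocomb c)"
  unfolding is_hpoly_def tocomb_supp using herm_fin by blast

lemma tocomb_eval:
  assumes a: "is_herm c"
  shows "peval (tocomb c) (comb z w) = heval c z w"
proof -
  have inj: "inj_on (\<lambda>p. case_sum (fst p) (snd p)) (hsupp c)"
  proof (rule inj_onI)
    fix p q assume "case_sum (fst p) (snd p) = case_sum (fst q) (snd q)"
    then have "case_sum (fst p) (snd p) \<circ> Inl = case_sum (fst q) (snd q) \<circ> Inl"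
      "case_sum (fst p) (snd p) \<circ> Inr = case_sum (fst q) (snd q) \<circ> Inr" by simp_all
    then show "p = q" by (simp add: o_def prod_eq_iff)
  qed
  show ?thesis
    unfolding peval_def tocomb_supp sum.reindex[OF inj] heval_def split_def
    by (rule sum.cong[OF refl]) (simp add: tocomb_def zmonom_comb o_def)
qed

lemma herm_two_nonzero:
  assumes "is_herm c" "is_herm d" "c a b \<noteq> 0" "d a' b' \<noteq> 0"
  shows "\<exists>z w. heval c z w \<noteq> 0 \<and> heval d z w \<noteq> 0"
proof -
  have "tocomb c (case_sum a b) \<noteq> 0" "tocomb d (case_sum a' b') \<noteq> 0"
    using assms(3,4) by (simp_all add: tocomb_def o_def)
  from two_nonzero[OF tocomb_poly[OF assms(1)] tocomb_poly[OF assms(2)] this]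
  obtain u where u: "peval (tocomb c) u \<noteq> 0" "peval (tocomb d) u \<noteq> 0" by blast
  define z where "z = u \<circ> Inl"
  define w where "w = (\<lambda>i. cnj (u (Inr i)))"
  have "comb z w = u" unfolding comb_def z_def w_def by (rule ext) (simp split: sum.split)
  then show ?thesis using u tocomb_eval[OF assms(1), of z w] tocomb_eval[OF assms(2), of z w] by metis
qed

lemma normsq_diag: "normsq F z z = of_real (\<Sum>f\<leftarrow>F. (cmod (peval f z))^2)"
  unfolding normsq_def by (induction F) (simp_all add: complex_norm_square[symmetric] del: of_real_power)

lemma normsq_zero_each: "normsq F z z = 0 \<Longrightarrow> f \<in> set F \<Longrightarrow> peval f z = 0"
proof -
  assume h: "normsq F z z = 0" and f: "f \<in> set F"
  have "(\<Sum>f\<leftarrow>F. (cmod (peval f z))^2) = 0" using h normsq_diag[of F z] by simp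
  moreover have "\<forall>x\<in>set (map (\<lambda>f. (cmod (peval f z))^2) F). 0 \<le> x" by auto
  ultimately have "\<forall>x\<in>set (map (\<lambda>f. (cmod (peval f z))^2) F). x = 0"
    using sum_list_nonneg_eq_0_iff by blast
  then show ?thesis using f by auto
qed

lemma normsq_Re_nonneg: "0 \<le> Re (normsq F z z)"
  unfolding normsq_diag Re_complex_of_real by (rule sum_list_nonneg) auto

lemma peval_nz_coeff: "peval f z \<noteq> 0 \<Longrightarrow> \<exists>\<alpha>. f \<alpha> \<noteq> 0"
  unfolding peval_def by (metis (mono_tags, lifting) Collect_empty_eq sum.empty)

lemma heval_nz_coeff: "heval c z w \<noteq> 0 \<Longrightarrow> \<exists>\<alpha> \<beta>. c \<alpha> \<beta> \<noteq> 0"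
  unfolding heval_def hsupp_def by (metis (mono_tags, lifting) Collect_empty_eq case_prodE sum.empty)

lemma tens_nonzero:
  assumes "is_hpmap G" "is_hpmap J" "hpmap_nonzero G" "hpmap_nonzero J"
  shows "hpmap_nonzero (tens G J)"
proof -
  obtain g a where g: "g \<in> set G" "g a \<noteq> 0" using assms(3) by (auto simp: hpmap_nonzero_def)
  obtain j b where j: "j \<in> set J" "j b \<noteq> 0" using assms(4) by (auto simp: hpmap_nonzero_def)
  have pg: "is_hpoly g" and pj: "is_hpoly j" using assms(1,2) g j by (auto simp: is_hpmap_def)
  obtain z where "peval g z \<noteq> 0" "peval j z \<noteq> 0" using two_nonzero[OF pg pj g(2) j(2)] by blast
  then have "peval (pmul g j) z \<noteq> 0" by (simp add: pmul_eval[OF pg pj])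
  then obtain \<gamma> where "pmul g j \<gamma> \<noteq> 0" using peval_nz_coeff by blast
  moreover have "pmul g j \<in> set (tens G J)" using g j by (auto simp: tens_def)
  ultimately show ?thesis by (auto simp: hpmap_nonzero_def)
qed

lemma append_map: "is_hpmap F \<Longrightarrow> is_hpmap H \<Longrightarrow> is_hpmap (F @ H)"
  by (auto simp: is_hpmap_def)

lemma Q_sum: "inQ c \<Longrightarrow> inQ d \<Longrightarrow> inQ (hsum c d)"
proof -
  assume "inQ c" "inQ d"
  then obtain F G H J where c: "is_herm c" "is_hpmap F" "is_hpmap G" "hpmap_nonzero G"
      "\<forall>z w. heval c z w * normsq G z w = normsq F z w"
    and d: "is_herm d" "is_hpmap H" "is_hpmap J" "hpmap_nonzero J"
      "\<forall>z w. heval d z w * normsq J z w = normsq H z w"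
    unfolding inQ_def by blast
  have "heval (hsum c d) z w * normsq (tens G J) z w = normsq (tens F J @ tens H G) z w" for z w
    using c(5) d(5)
    by (simp add: hsum_eval[OF c(1) d(1)] normsq_tens normsq_append c(2,3) d(2,3) algebra_simps)
  then show ?thesis unfolding inQ_def
    using hsum_herm[OF c(1) d(1)] tens_map[OF c(2) d(3)] tens_map[OF d(2) c(3)] tens_map[OF c(3) d(3)]
      tens_nonzero[OF c(3) d(3) c(4) d(4)] append_map by blast
qed

lemma Q_prod: "inQ c \<Longrightarrow> inQ d \<Longrightarrow> inQ (hprod c d)"
proof -
  assume "inQ c" "inQ d"
  then obtain F G H J where c: "is_herm c" "is_hpmap F" "is_hpmap G" "hpmap_nonzero G"
      "\<forall>z w. heval c z w * normsq G z w = normsq F z w"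
    and d: "is_herm d" "is_hpmap H" "is_hpmap J" "hpmap_nonzero J"
      "\<forall>z w. heval d z w * normsq J z w = normsq H z w"
    unfolding inQ_def by blast
  have "heval (hprod c d) z w * normsq (tens G J) z w = normsq (tens F H) z w" for z w
  proof -
    have "heval (hprod c d) z w * normsq (tens G J) z w
        = (heval c z w * normsq G z w) * (heval d z w * normsq J z w)"
      by (simp add: hprod_eval[OF c(1) d(1)] normsq_tens c(3) d(3))
    also have "\<dots> = normsq (tens F H) z w" using c(5) d(5) by (simp add: normsq_tens c(2) d(2))
    finally show ?thesis .
  qed
  then show ?thesis unfolding inQ_def
    using hprod_herm[OF c(1) d(1)] tens_map[OF c(2) d(2)] tens_map[OF c(3) d(3)]
      tens_nonzero[OF c(3) d(3) c(4) d(4)] by blast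
qed

lemma Q'_prod: "inQ' c \<Longrightarrow> inQ' d \<Longrightarrow> inQ' (hprod c d)"
proof -
  assume "inQ' c" "inQ' d"
  then obtain s F s' F' where c: "is_herm c" "\<forall>z. 0 \<le> Re (heval c z z)" "is_herm s"
      "\<forall>z. 0 \<le> Re (heval s z z)" "\<exists>\<alpha> \<beta>. s \<alpha> \<beta> \<noteq> 0" "is_hpmap F"
      "\<forall>z w. heval c z w * heval s z w = normsq F z w"
    and d: "is_herm d" "\<forall>z. 0 \<le> Re (heval d z z)" "is_herm s'"
      "\<forall>z. 0 \<le> Re (heval s' z z)" "\<exists>\<alpha> \<beta>. s' \<alpha> \<beta> \<noteq> 0" "is_hpmap F'"
      "\<forall>z w. heval d z w * heval s' z w = normsq F' z w"
    unfolding inQ'_def by blast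
  have pos: "0 \<le> Re (heval (hprod a b) z z)"
    if "is_herm a" "is_herm b" "\<forall>z. 0 \<le> Re (heval a z z)" "\<forall>z. 0 \<le> Re (heval b z z)" for a b z
  proof -
    have "heval (hprod a b) z z = of_real (Re (heval a z z)) * of_real (Re (heval b z z))"
      using hprod_eval[OF that(1,2)] heval_diag_Re[OF that(1)] heval_diag_Re[OF that(2)] by metis
    then show ?thesis using that(3,4) by simp
  qed
  obtain a b where "s a b \<noteq> 0" using c(5) by blast
  moreover obtain a' b' where "s' a' b' \<noteq> 0" using d(5) by blast
  ultimately obtain z w where "heval s z w \<noteq> 0" "heval s' z w \<noteq> 0"
    using herm_two_nonzero[OF c(3) d(3)] by blast
  then have "heval (hprod s s') z w \<noteq> 0" by (simp add: hprod_eval[OF c(3) d(3)])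
  then have nz: "\<exists>\<alpha> \<beta>. hprod s s' \<alpha> \<beta> \<noteq> 0" by (rule heval_nz_coeff)
  have "heval (hprod c d) z w * heval (hprod s s') z w = normsq (tens F F') z w" for z w
  proof -
    have "heval (hprod c d) z w * heval (hprod s s') z w
        = (heval c z w * heval s z w) * (heval d z w * heval s' z w)"
      by (simp add: hprod_eval c(1,3) d(1,3))
    also have "\<dots> = normsq (tens F F') z w" using c(7) d(7) by (simp add: normsq_tens c(6) d(6))
    finally show ?thesis .
  qed
  then show ?thesis unfolding inQ'_def
    using hprod_herm[OF c(1) d(1)] hprod_herm[OF c(3) d(3)] pos[OF c(1) d(1) c(2) d(2)]
      pos[OF c(3) d(3) c(4) d(4)] nz tens_map[OF c(6) d(6)] by blast
qed




definition ka :: "'n \<Rightarrow> nat \<Rightarrow> ('n::finite \<Rightarrow> nat)" where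
  "ka a k = (\<lambda>i. if i = a then k else 0)"

lemma ka_eq: "(ka a k = ka a j) = (k = j)"
  unfolding ka_def by (metis)

lemma zmonom_ka: "zmonom z (ka a k) = z a ^ k"
proof -
  have "zmonom z (ka a k) = (\<Prod>i\<in>UNIV. if i = a then z a ^ k else 1)"
    unfolding zmonom_def ka_def by (rule prod.cong) auto
  then show ?thesis by simp
qed

definition dg :: "'n \<Rightarrow> (nat \<Rightarrow> real) \<Rightarrow> nat \<Rightarrow> ('n::finite) hcoeffs" where
  "dg a q N = (\<lambda>\<alpha> \<beta>. \<Sum>k<N. if \<alpha> = ka a k \<and> \<beta> = ka a k then complex_of_real (q k) else 0)"

lemma dg_supp: "hsupp (dg a q N) \<subseteq> (\<lambda>k. (ka a k, ka a k)) ` {..<N}"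
proof
  fix p assume "p \<in> hsupp (dg a q N)"
  then have "dg a q N (fst p) (snd p) \<noteq> 0" by (simp add: hsupp_def split_def)
  then obtain k where k: "k \<in> {..<N}" and
    "(if fst p = ka a k \<and> snd p = ka a k then complex_of_real (q k) else 0) \<noteq> 0"
    unfolding dg_def using sum.not_neutral_contains_not_neutral by blast
  then have "p = (ka a k, ka a k)" by (cases "fst p = ka a k \<and> snd p = ka a k") (auto simp: prod_eq_iff)
  then show "p \<in> (\<lambda>k. (ka a k, ka a k)) ` {..<N}" using k by blast
qed

lemma dg_herm: "is_herm (dg a q N)"
proof -
  have "finite (hsupp (dg a q N))" by (rule finite_subset[OF dg_supp]) simp
  moreover have "dg a q N \<alpha> \<beta> = cnj (dg a q N \<beta> \<alpha>)" for \<alpha> \<beta>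
    unfolding dg_def cnj_sum by (rule sum.cong[OF refl]) (simp add: conj_commute)
  ultimately show ?thesis unfolding is_herm_def by blast
qed

lemma dg_at: "j < N \<Longrightarrow> dg a q N (ka a j) (ka a j) = complex_of_real (q j)"
  unfolding dg_def ka_eq by (simp add: eq_commute[of j])

lemma dg_eval: "heval (dg a q N) z w = (\<Sum>k<N. complex_of_real (q k) * (z a * cnj (w a)) ^ k)"
proof -
  have inj: "inj_on (\<lambda>k. (ka a k, ka a k)) {..<N}" by (rule inj_onI) (simp add: ka_eq)
  have "heval (dg a q N) z w = (\<Sum>p\<in>(\<lambda>k. (ka a k, ka a k)) ` {..<N}.
      dg a q N (fst p) (snd p) * zmonom z (fst p) * cnj (zmonom w (snd p)))"
    by (rule heval_superset[OF _ dg_supp]) simp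
  also have "\<dots> = (\<Sum>k<N. complex_of_real (q k) * (z a * cnj (w a)) ^ k)"
    unfolding sum.reindex[OF inj]
    by (rule sum.cong[OF refl]) (simp add: dg_at zmonom_ka power_mult_distrib)
  finally show ?thesis .
qed

definition hmono :: "'n \<Rightarrow> real \<Rightarrow> nat \<Rightarrow> ('n::finite) pcoeffs" where
  "hmono a c k = (\<lambda>\<alpha>. if \<alpha> = ka a k then complex_of_real c else 0)"

lemma mono_poly: "is_hpoly (hmono a c k)"
proof -
  have "{\<alpha>. hmono a c k \<alpha> \<noteq> 0} \<subseteq> {ka a k}" by (auto simp: hmono_def)
  then show ?thesis unfolding is_hpoly_def using finite_subset by blast
qed

lemma mono_eval: "peval (hmono a c k) z = complex_of_real c * z a ^ k"
proof -
  have "{\<alpha>. hmono a c k \<alpha> \<noteq> 0} \<subseteq> {ka a k}" by (auto simp: hmono_def)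
  from peval_superset[OF _ this] show ?thesis by (simp add: hmono_def zmonom_ka)
qed

lemma normsq_monos:
  assumes "\<forall>k<M. 0 \<le> U k"
  shows "normsq (map (\<lambda>k. hmono a (sqrt (U k)) k) [0..<M]) z w
     = (\<Sum>k<M. complex_of_real (U k) * (z a * cnj (w a)) ^ k)"
proof -
  have "normsq (map (\<lambda>k. hmono a (sqrt (U k)) k) [0..<M]) z w
     = (\<Sum>k\<in>set [0..<M]. peval (hmono a (sqrt (U k)) k) z * cnj (peval (hmono a (sqrt (U k)) k) w))"
    unfolding normsq_def map_map o_def interv_sum_list_conv_sum_set_nat ..
  also have "\<dots> = (\<Sum>k<M. complex_of_real (U k) * (z a * cnj (w a)) ^ k)"
  proof (rule sum.cong)
    fix k assume "k \<in> {..<M}"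
    then have "0 \<le> U k" using assms by auto
    then have "complex_of_real (sqrt (U k)) * complex_of_real (sqrt (U k)) = complex_of_real (U k)"
    proof -
      have "sqrt (U k) * sqrt (U k) = U k" using \<open>0 \<le> U k\<close> by simp
      then show ?thesis by (metis of_real_mult)
    qed
    moreover have "peval (hmono a (sqrt (U k)) k) z * cnj (peval (hmono a (sqrt (U k)) k) w) =
      (complex_of_real (sqrt (U k)) * complex_of_real (sqrt (U k))) * (z a ^ k * cnj (w a) ^ k)"
      unfolding mono_eval by (simp only: complex_cnj_mult complex_cnj_complex_of_real complex_cnj_power mult_ac)
    ultimately show "peval (hmono a (sqrt (U k)) k) z * cnj (peval (hmono a (sqrt (U k)) k) w) =
      complex_of_real (U k) * (z a * cnj (w a)) ^ k"
      by (simp only: power_mult_distrib)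
  qed (simp only: set_upt atLeast0LessThan)
  finally show ?thesis .
qed

lemma cheb:
  fixes U :: "nat \<Rightarrow> complex"
  assumes "U 0 = 1" "U 1 = 2 * c" "\<And>k. U (k + 2) = 2 * c * U (k + 1) - U k"
  shows "(1 - 2 * c * u + u^2) * (\<Sum>k<Suc N. U k * u ^ k) = 1 - U (Suc N) * u ^ Suc N + U N * u ^ Suc (Suc N)"
proof (induction N)
  case 0
  have "(1 - 2 * c * u + u^2) * (\<Sum>k<Suc 0. U k * u ^ k) = 1 - 2 * c * u + u^2" using assms(1) by simp
  also have "\<dots> = 1 - U (Suc 0) * u ^ Suc 0 + U 0 * u ^ Suc (Suc 0)" using assms(1,2) by (simp add: power2_eq_square)
  finally show ?case .
next
  case (Suc N)
  have r: "U (Suc (Suc N)) = 2 * c * U (Suc N) - U N" using assms(3)[of N] by (simp add: numeral_2_eq_2)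
  have p2: "u ^ Suc (Suc N) = u * u ^ Suc N" and p3: "u ^ Suc (Suc (Suc N)) = u * (u * u ^ Suc N)" by simp_all
  have alg: "\<And>A B p. 1 - A*p + B*(u*p) + (1 - 2*c*u + u^2)*(A*p) = 1 - (2*c*A - B)*(u*p) + A*(u*(u*p))"
    by algebra
  have "(1 - 2 * c * u + u^2) * (\<Sum>k<Suc (Suc N). U k * u ^ k)
     = (1 - 2 * c * u + u^2) * (\<Sum>k<Suc N. U k * u ^ k) + (1 - 2 * c * u + u^2) * (U (Suc N) * u ^ Suc N)"
    by (simp only: sum.lessThan_Suc distrib_left)
  also have "\<dots> = 1 - U (Suc N) * u ^ Suc N + U N * u ^ Suc (Suc N) + (1 - 2 * c * u + u^2) * (U (Suc N) * u ^ Suc N)"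
    using Suc.IH by simp
  also have "\<dots> = 1 - U (Suc (Suc N)) * u ^ Suc (Suc N) + U (Suc N) * u ^ Suc (Suc (Suc N))"
    unfolding r p2 p3 by (rule alg)
  finally show ?case .
qed




lemma infinite_sphere_c: "0 < r \<Longrightarrow> infinite (sphere (0::complex) r)"
proof
  assume r: "0 < r" and f: "finite (sphere (0::complex) r)"
  have "connected (sphere (0::complex) r)" by (rule connected_sphere) simp
  then have d: "sphere (0::complex) r = {} \<or> (\<exists>x. sphere (0::complex) r = {x})"
    using connected_finite_iff_sing f by blast
  have m1: "complex_of_real r \<in> sphere 0 r" and m2: "- complex_of_real r \<in> sphere 0 r" using r by auto
  have ne: "complex_of_real r \<noteq> - complex_of_real r" using r by (simp add: complex_eq_iff)
  from d m1 obtain x where x: "sphere (0::complex) r = {x}" by auto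
  from m1 m2 have "complex_of_real r = x" "- complex_of_real r = x" unfolding x by auto
  then show False using ne by simp
qed

lemma mono_sq: "0 \<le> x \<Longrightarrow> peval (hmono a (sqrt x) k) z * cnj (peval (hmono a (sqrt x) k) w)
   = complex_of_real x * (z a * cnj (w a)) ^ k"
proof -
  assume x: "0 \<le> x"
  have "sqrt x * sqrt x = x" using x by simp
  then have sq: "complex_of_real (sqrt x) * complex_of_real (sqrt x) = complex_of_real x" by (metis of_real_mult)
  have "peval (hmono a (sqrt x) k) z * cnj (peval (hmono a (sqrt x) k) w) =
      (complex_of_real (sqrt x) * complex_of_real (sqrt x)) * (z a ^ k * cnj (w a) ^ k)"
    unfolding mono_eval by (simp only: complex_cnj_mult complex_cnj_complex_of_real complex_cnj_power mult_ac)
  then show ?thesis unfolding sq by (simp only: power_mult_distrib)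
qed

lemma peval_zero: "\<forall>\<alpha>. f \<alpha> = 0 \<Longrightarrow> peval f z = 0"
  unfolding peval_def by simp

lemma normsq_zeroF: "\<forall>f\<in>set F. \<forall>\<alpha>. f \<alpha> = 0 \<Longrightarrow> normsq F z w = 0"
  unfolding normsq_def by (induction F) (simp_all add: peval_zero)

lemma norm_crv: "cmod (crv B idx t i) = cmod t ^ (B ^ idx i)"
  by (simp add: crv_def norm_power)

lemma vanish_torus:
  fixes F :: "('n::finite) pcoeffs list"
  assumes hp: "is_hpmap F" and v: "\<forall>z. (\<forall>i. cmod (z i) = 1) \<longrightarrow> normsq F z z = 0"
  shows "\<forall>f\<in>set F. \<forall>\<alpha>. f \<alpha> = 0"
proof (intro ballI allI)
  fix f \<alpha> assume f: "f \<in> set F"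
  obtain idx where bij: "bij_betw idx (UNIV :: 'n set) {..<CARD('n)}" using ex_idx by blast
  have pf: "is_hpoly f" using hp f by (simp add: is_hpmap_def)
  define B where "B = bnd {\<alpha>. f \<alpha> \<noteq> 0}"
  have bd: "\<forall>\<alpha>. f \<alpha> \<noteq> 0 \<longrightarrow> (\<forall>i. \<alpha> i < B)"
    unfolding B_def using bnd_le[of "{\<alpha>. f \<alpha> \<noteq> 0}"] pf by (auto simp: is_hpoly_def)
  have "\<forall>t\<in>sphere 0 1. peval f (crv B idx t) = 0"
  proof
    fix t :: complex assume "t \<in> sphere 0 1"
    then have "\<forall>i. cmod (crv B idx t i) = 1" by (simp add: norm_crv)
    then have "normsq F (crv B idx t) (crv B idx t) = 0" using v by blast
    then show "peval f (crv B idx t) = 0" using normsq_zero_each f by blast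
  qed
  then show "f \<alpha> = 0" using kron_zero[OF pf bij bd infinite_sphere_c[of 1]] by simp
qed

abbreviation qf :: "real \<Rightarrow> nat \<Rightarrow> real" where
  "qf c \<equiv> (\<lambda>k. if k = 1 then -2 * c else 1)"

lemma eval3: "heval (dg a (qf c) 3) z w = 1 - 2 * complex_of_real c * (z a * cnj (w a)) + (z a * cnj (w a))^2"
  by (simp add: dg_eval numeral_3_eq_3 power2_eq_square)

lemma zcz: "z * cnj z = complex_of_real ((cmod z)^2)"
  by (rule complex_norm_square[symmetric])

lemma eval3_diag: "heval (dg a (qf c) 3) z z = complex_of_real (1 - 2 * c * (cmod (z a))^2 + ((cmod (z a))^2)^2)"
  unfolding eval3 zcz by simp

lemma r0_nz: "heval (dg a (qf 1) 3) z z = 0 \<longleftrightarrow> (cmod (z a))^2 = 1"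
proof -
  have "1 - 2 * 1 * (cmod (z a))^2 + ((cmod (z a))^2)^2 = (1 - (cmod (z a))^2)^2"
    by (simp add: power2_eq_square left_diff_distrib right_diff_distrib)
  then show ?thesis unfolding eval3_diag of_real_eq_0_iff by simp
qed

lemma r0_F_zero:
  fixes F :: "('n::finite) pcoeffs list"
  assumes "is_hpmap F" "\<forall>z. heval (dg a (qf 1) 3) z z * X z = normsq F z z"
  shows "\<forall>f\<in>set F. \<forall>\<alpha>. f \<alpha> = 0"
proof (rule vanish_torus[OF assms(1)], intro allI impI)
  fix z :: "'n \<Rightarrow> complex" assume "\<forall>i. cmod (z i) = 1"
  then have "(cmod (z a))^2 = 1" by simp
  then have "heval (dg a (qf 1) 3) z z = 0" using r0_nz[of a z] by blast
  then show "normsq F z z = 0" using assms(2)[rule_format, of z] by simp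
qed

lemma r0_notQ: "\<not> inQ (dg (a::'n::finite) (qf 1) 3)"
proof
  assume "inQ (dg a (qf 1) 3)"
  then obtain F G where F: "is_hpmap F" and G: "is_hpmap G" "hpmap_nonzero G"
    and e: "\<forall>z w. heval (dg a (qf 1) 3) z w * normsq G z w = normsq F z w"
    unfolding inQ_def by blast
  have "\<forall>f\<in>set F. \<forall>\<alpha>. f \<alpha> = 0" using r0_F_zero[OF F, of a "\<lambda>z. normsq G z z"] e by blast
  then have e2: "heval (dg a (qf 1) 3) z z * normsq G z z = 0" for z
    using e[rule_format, of z z] normsq_zeroF[of F z z] by simp
  obtain g \<alpha>0 where g: "g \<in> set G" "g \<alpha>0 \<noteq> 0" using G(2) by (auto simp: hpmap_nonzero_def)
  obtain idx where bij: "bij_betw idx (UNIV :: 'n set) {..<CARD('n)}" using ex_idx by blast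
  have pg: "is_hpoly g" using G(1) g by (simp add: is_hpmap_def)
  define B where "B = bnd {\<alpha>. g \<alpha> \<noteq> 0}"
  have bd: "\<forall>\<alpha>. g \<alpha> \<noteq> 0 \<longrightarrow> (\<forall>i. \<alpha> i < B)"
    unfolding B_def using bnd_le[of "{\<alpha>. g \<alpha> \<noteq> 0}"] pg by (auto simp: is_hpoly_def)
  then have "\<alpha>0 a < B" using g(2) by blast
  then have B1: "1 \<le> B" by simp
  have "\<forall>t\<in>sphere 0 2. peval g (crv B idx t) = 0"
  proof
    fix t :: complex assume "t \<in> sphere 0 2"
    then have ct: "cmod (crv B idx t a) = 2 ^ (B ^ idx a)" by (simp add: norm_crv)
    have "1 \<le> B ^ idx a" using B1 by simp
    then have "(2::real) ^ 1 \<le> 2 ^ (B ^ idx a)"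
      by (rule power_increasing) simp
    then have "2 \<le> cmod (crv B idx t a)" unfolding ct by simp
    then have "4 \<le> (cmod (crv B idx t a))^2"
      using power_mono[of 2 "cmod (crv B idx t a)" 2] by simp
    then have "(cmod (crv B idx t a))^2 \<noteq> 1" by linarith
    then have "heval (dg a (qf 1) 3) (crv B idx t) (crv B idx t) \<noteq> 0" using r0_nz by blast
    then have "normsq G (crv B idx t) (crv B idx t) = 0" using e2[of "crv B idx t"] by auto
    then show "peval g (crv B idx t) = 0" using normsq_zero_each g(1) by blast
  qed
  then have "g \<alpha>0 = 0" using kron_zero[OF pg bij bd infinite_sphere_c[of 2]] by simp
  then show False using g(2) by simp
qed

lemma r0_notQ': "\<not> inQ' (dg (a::'n::finite) (qf 1) 3)"
proof
  assume "inQ' (dg a (qf 1) 3)"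
  then obtain s F where s: "is_herm s" "\<exists>\<alpha> \<beta>. s \<alpha> \<beta> \<noteq> 0" and F: "is_hpmap F"
    and e: "\<forall>z w. heval (dg a (qf 1) 3) z w * heval s z w = normsq F z w"
    unfolding inQ'_def by blast
  have "\<forall>f\<in>set F. \<forall>\<alpha>. f \<alpha> = 0" using r0_F_zero[OF F, of a "\<lambda>z. heval s z z"] e by blast
  then have e2: "heval (dg a (qf 1) 3) z w * heval s z w = 0" for z w
    using e[rule_format, of z w] normsq_zeroF[of F z w] by simp
  have "dg a (qf 1) 3 (ka a 0) (ka a 0) \<noteq> 0" by (simp add: dg_at)
  moreover obtain \<alpha> \<beta> where "s \<alpha> \<beta> \<noteq> 0" using s(2) by blast
  ultimately obtain z w where "heval (dg a (qf 1) 3) z w \<noteq> 0" "heval s z w \<noteq> 0"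
    using herm_two_nonzero[OF dg_herm s(1)] by blast
  then show False using e2[of z w] by auto
qed




lemma approx_in:
  fixes a :: "'n::finite"
  assumes p0: "0 < \<phi>" and p1: "\<phi> < pi/2"
  shows "inQ (dg a (qf (cos \<phi>)) 3) \<and> inQ' (dg a (qf (cos \<phi>)) 3)"
proof -
  have sp: "0 < sin \<phi>" by (rule sin_gt_zero) (use p0 p1 in auto)
  obtain n where n1: "\<not> pi \<le> real n * \<phi>" and n2: "pi \<le> real (Suc n) * \<phi>"
  proof -
    obtain m where "pi < real m * \<phi>" using ex_less_of_nat_mult[OF p0] by blast
    then have "\<exists>m. pi \<le> real m * \<phi>" by (meson less_imp_le)
    moreover have "\<not> pi \<le> real 0 * \<phi>" using pi_gt_zero by (simp only: of_nat_0 mult_zero_left)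
    ultimately obtain n where "\<not> pi \<le> real n * \<phi>" "pi \<le> real (Suc n) * \<phi>"
      using exists_least_lemma[of "\<lambda>n. pi \<le> real n * \<phi>"] by blast
    then show thesis using that by blast
  qed
  have "n \<noteq> 0"
  proof
    assume "n = 0"
    then have "real (Suc n) * \<phi> = \<phi>" by simp
    then show False using n2 p1 pi_gt_zero by linarith
  qed
  then obtain N where nN: "n = Suc N" by (cases n) auto
  define U where "U = (\<lambda>k. sin (real (Suc k) * \<phi>) / sin \<phi>)"
  have U0: "U 0 = 1" using sp by (simp add: U_def)
  have U1: "U 1 = 2 * cos \<phi>"
    using sp sin_double[of \<phi>] by (simp add: U_def numeral_2_eq_2[symmetric])
  have Ur: "U (k + 2) = 2 * cos \<phi> * U (k + 1) - U k" for k
  proof -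
    have e1: "real (Suc (k+2)) * \<phi> = real (Suc (k+1)) * \<phi> + \<phi>" by (simp add: algebra_simps)
    have e2: "real (Suc k) * \<phi> = real (Suc (k+1)) * \<phi> - \<phi>" by (simp add: algebra_simps)
    have "sin (real (Suc (k+2)) * \<phi>) = 2 * cos \<phi> * sin (real (Suc (k+1)) * \<phi>) - sin (real (Suc k) * \<phi>)"
      by (simp only: e1 e2 sin_add sin_diff) algebra
    then show ?thesis unfolding U_def by (simp add: diff_divide_distrib)
  qed
  have Upos: "0 \<le> U k" if "k < n" for k
  proof -
    have "real (Suc k) * \<phi> \<le> real n * \<phi>" using that p0 by (intro mult_right_mono) auto
    then have "real (Suc k) * \<phi> < pi" using n1 by linarith
    moreover have "0 < real (Suc k) * \<phi>" using p0 by simp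
    ultimately have "0 < sin (real (Suc k) * \<phi>)" by (intro sin_gt_zero)
    then show ?thesis unfolding U_def using sp by simp
  qed
  have Un: "U n \<le> 0"
  proof -
    have "real (Suc n) * \<phi> = real n * \<phi> + \<phi>" by (simp add: algebra_simps)
    then have "real (Suc n) * \<phi> < 2 * pi" using n1 p1 pi_gt_zero by linarith
    then have "sin (real (Suc n) * \<phi>) \<le> 0" using n2 by (intro sin_le_zero)
    then show ?thesis unfolding U_def using sp by (simp add: divide_nonpos_pos)
  qed
  have UN: "0 \<le> U N" using Upos nN by simp
  define G where "G = map (\<lambda>k. hmono a (sqrt (U k)) k) [0..<n]"
  define F where "F = [hmono a (sqrt 1) 0, hmono a (sqrt (- U n)) n, hmono a (sqrt (U N)) (Suc n)]"
  have hG: "is_hpmap G" by (auto simp: is_hpmap_def G_def mono_poly)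
  have hF: "is_hpmap F" by (auto simp: is_hpmap_def F_def mono_poly)
  have "hmono a (sqrt (U 0)) 0 \<in> set G" unfolding G_def set_map set_upt by (rule imageI) (simp add: nN)
  moreover have "hmono a (sqrt (U 0)) 0 (ka a 0) \<noteq> 0" by (simp add: hmono_def U0)
  ultimately have nzG: "hpmap_nonzero G" unfolding hpmap_nonzero_def by blast
  have nG: "normsq G z w = (\<Sum>k<n. complex_of_real (U k) * (z a * cnj (w a)) ^ k)" for z w
    unfolding G_def by (rule normsq_monos) (use Upos in blast)
  have nF: "normsq F z w = 1 + complex_of_real (- U n) * (z a * cnj (w a)) ^ n
      + complex_of_real (U N) * (z a * cnj (w a)) ^ Suc n" for z w
  proof -
    have "0 \<le> - U n" using Un by simp
    note m = mono_sq[of 1 a 0 z w] mono_sq[OF this, of a n z w] mono_sq[OF UN, of a "Suc n" z w]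
    show ?thesis unfolding F_def normsq_def using m by simp
  qed
  have key: "heval (dg a (qf (cos \<phi>)) 3) z w * normsq G z w = normsq F z w" for z w
  proof -
    let ?u = "z a * cnj (w a)"
    let ?Uc = "\<lambda>k. complex_of_real (U k)"
    have c: "(1 - 2 * complex_of_real (cos \<phi>) * ?u + ?u^2) * (\<Sum>k<Suc N. ?Uc k * ?u ^ k)
        = 1 - ?Uc (Suc N) * ?u ^ Suc N + ?Uc N * ?u ^ Suc (Suc N)"
    proof (rule cheb)
      show "?Uc 0 = 1" by (simp add: U0)
      show "?Uc 1 = 2 * complex_of_real (cos \<phi>)" using U1 by simp
      show "?Uc (k + 2) = 2 * complex_of_real (cos \<phi>) * ?Uc (k + 1) - ?Uc k" for k
      proof -
        have h: "U (Suc (Suc k)) = 2 * cos \<phi> * U (Suc k) - U k" using Ur[of k] by (simp add: numeral_2_eq_2)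
        show ?thesis by (simp add: h)
      qed
    qed
    show ?thesis unfolding eval3 nG nF nN using c by simp
  qed
  have Q: "inQ (dg a (qf (cos \<phi>)) 3)"
    unfolding inQ_def using dg_herm hF hG nzG key by blast
  have pr: "0 \<le> Re (heval (dg a (qf (cos \<phi>)) 3) z z)" for z
  proof -
    let ?t = "(cmod (z a))^2" and ?c = "cos \<phi>"
    have "0 \<le> (?t - ?c)^2" by simp
    moreover have "?c^2 \<le> 1" using sin_cos_squared_add[of \<phi>] by (metis le_add_same_cancel2 zero_le_power2)
    moreover have "1 - 2 * ?c * ?t + ?t^2 = (?t - ?c)^2 + (1 - ?c^2)"
      by (simp add: power2_eq_square algebra_simps)
    ultimately have "0 \<le> 1 - 2 * ?c * ?t + ?t^2" by linarith
    then show ?thesis unfolding eval3_diag by simp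
  qed
  define s where "s = dg a U n"
  have ps: "0 \<le> Re (heval s z z)" for z
  proof -
    have h: "heval s z z = complex_of_real (\<Sum>k<n. U k * ((cmod (z a))^2) ^ k)"
      unfolding s_def dg_eval zcz by simp
    have "0 \<le> (\<Sum>k<n. U k * ((cmod (z a))^2) ^ k)" by (rule sum_nonneg) (simp add: Upos)
    then show ?thesis unfolding h by simp
  qed
  have nzs: "s (ka a 0) (ka a 0) \<noteq> 0" unfolding s_def using nN by (simp add: dg_at U0)
  have es: "heval s z w = normsq G z w" for z w unfolding s_def dg_eval nG ..
  have Q': "inQ' (dg a (qf (cos \<phi>)) 3)"
    unfolding inQ'_def using dg_herm pr ps nzs hF key es unfolding s_def by metis
  show ?thesis using Q Q' by blast
qed




lemma approx_in2:
  fixes a :: "'n::finite" and y :: real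
  assumes "y \<noteq> 0" "\<bar>y\<bar> < pi/2"
  shows "inQ (dg a (qf (cos y)) 3) \<and> inQ' (dg a (qf (cos y)) 3)"
proof (cases "0 < y")
  case True
  then show ?thesis using approx_in[of y a] assms by simp
next
  case False
  then have "0 < - y" "- y < pi/2" using assms by auto
  from approx_in[OF this, of a] show ?thesis by (simp only: cos_minus)
qed

lemma family_ncl:
  "not_closed_under_limits (inQ :: ('n::finite) hcoeffs \<Rightarrow> bool) \<and>
   not_closed_under_limits (inQ' :: 'n hcoeffs \<Rightarrow> bool)"
proof -
  define a :: 'n where "a = undefined"
  define K :: "(nat \<Rightarrow> real) set" where "K = {x. \<forall>i\<ge>1. x i = 0}"
  define r :: "(nat \<Rightarrow> real) \<Rightarrow> 'n hcoeffs" where "r = (\<lambda>x. dg a (qf (cos (x 0))) 3)"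
  define L :: "nat \<Rightarrow> real" where "L = (\<lambda>_. 0)"
  define D where "D = (\<lambda>k. (ka a k, ka a k)) ` {..<3::nat}"
  have clK: "closed K"
  proof -
    have "closed {x::nat \<Rightarrow> real. 1 \<le> i \<longrightarrow> x i = 0}" for i
    proof (cases "1 \<le> i")
      case True
      have "closed {x::nat \<Rightarrow> real. x i = (\<lambda>_. 0) x}"
        by (rule closed_Collect_eq) (simp_all add: continuous_on_const)
      then show ?thesis using True by simp
    next
      case False then show ?thesis by simp
    qed
    then show ?thesis unfolding K_def by (intro closed_Collect_all) simp
  qed
  have Ksub: "K \<subseteq> {x. \<forall>i\<ge>1. x i = 0}" unfolding K_def by simp
  have fD: "finite D" unfolding D_def by simp
  have hr: "\<forall>t\<in>K. is_herm (r t) \<and> hsupp (r t) \<subseteq> D"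
    unfolding r_def D_def using dg_herm dg_supp by blast
  have c0: "continuous_on K (\<lambda>t::nat \<Rightarrow> real. t 0)"
    by (rule continuous_on_subset[OF continuous_on_product_coordinates]) simp
  have cont: "continuous_on K (\<lambda>t. r t \<alpha> \<beta>)" for \<alpha> \<beta>
    unfolding r_def dg_def
  proof (rule continuous_on_sum)
    fix k assume "k \<in> {..<(3::nat)}"
    show "continuous_on K (\<lambda>t. if \<alpha> = ka a k \<and> \<beta> = ka a k then complex_of_real (qf (cos (t 0)) k) else 0)"
    proof (cases "\<alpha> = ka a k \<and> \<beta> = ka a k")
      case True
      have "continuous_on K (\<lambda>t. complex_of_real (qf (cos (t 0)) k))"
      proof (cases "k = 1")
        case True
        then show ?thesis by simp (intro continuous_intros c0)
      next
        case False
        then show ?thesis by (simp add: continuous_on_const)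
      qed
      then show ?thesis using True by simp
    next
      case False then show ?thesis by (simp only: if_not_P[OF False] if_False) (rule continuous_on_const)
    qed
  qed
  have LK: "L \<in> K" unfolding L_def K_def by simp
  define emb :: "real \<Rightarrow> (nat \<Rightarrow> real)" where "emb = (\<lambda>e i. if i = 0 then e else 0)"
  have cemb: "continuous_on UNIV emb"
  proof (rule continuous_on_coordinatewise_then_product)
    fix i show "continuous_on UNIV (\<lambda>x. emb x i)"
      by (cases "i = 0") (simp_all add: emb_def continuous_on_const continuous_on_id)
  qed
  have embK: "emb e \<in> K" for e unfolding emb_def K_def by simp
  have embL: "emb 0 = L" unfolding emb_def L_def by auto
  have embne: "emb e \<noteq> L" if "e \<noteq> 0" for e
  proof
    assume "emb e = L"
    then have "emb e 0 = L 0" by simp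
    then show False using that by (simp add: emb_def L_def)
  qed
  have lim: "L islimpt K"
  proof (rule islimptI)
    fix T assume "L \<in> T" "open T"
    then have "open (emb -` T \<inter> UNIV)" using cemb continuous_on_open_vimage[of UNIV emb] by blast
    moreover have "0 \<in> emb -` T" using \<open>L \<in> T\<close> embL by simp
    ultimately obtain \<epsilon> where \<epsilon>: "\<epsilon> > 0" "ball 0 \<epsilon> \<subseteq> emb -` T"
      using open_contains_ball[THEN iffD1, rule_format, of "emb -` T" 0] by auto
    then have "\<epsilon>/2 \<in> ball 0 \<epsilon>" by simp
    then have "emb (\<epsilon>/2) \<in> T" using \<epsilon>(2) by blast
    moreover have "emb (\<epsilon>/2) \<noteq> L" using embne[of "\<epsilon>/2"] \<epsilon>(1) by simp
    ultimately show "\<exists>y\<in>K. y \<in> T \<and> y \<noteq> L" using embK[of "\<epsilon>/2"] by blast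
  qed
  have ev: "eventually (\<lambda>t. inQ (r t) \<and> inQ' (r t)) (at L within K)"
    unfolding eventually_at_topological
  proof (intro exI conjI ballI impI)
    show "open {x::nat \<Rightarrow> real. \<bar>x 0\<bar> < pi/2}"
      by (rule open_Collect_less) (intro continuous_intros continuous_on_product_coordinates)+
    show "L \<in> {x. \<bar>x 0\<bar> < pi/2}" unfolding L_def using pi_gt_zero by simp
    fix x assume x: "x \<in> {x::nat \<Rightarrow> real. \<bar>x 0\<bar> < pi/2}" "x \<noteq> L" "x \<in> K"
    have "x 0 \<noteq> 0"
    proof
      assume h: "x 0 = 0"
      have "x i = 0" for i using h x(3) unfolding K_def by (cases i) auto
      then have "x = L" unfolding L_def by auto
      then show False using x(2) by simp
    qed
    then have pp: "0 < \<bar>x 0\<bar>" "\<bar>x 0\<bar> < pi/2" using x(1) by auto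
    have cx: "cos (x 0) = cos \<bar>x 0\<bar>" by (cases "0 \<le> x 0") simp_all
    have "inQ (r x) \<and> inQ' (r x)" unfolding r_def by (rule approx_in2) (use \<open>x 0 \<noteq> 0\<close> x(1) in auto)
    then show "inQ (r x)" "inQ' (r x)" by simp_all
  qed
  have rL: "r L = dg a (qf 1) 3" unfolding r_def L_def by (simp only: cos_zero)
  have n1: "\<not> inQ (r L)" unfolding rL by (rule r0_notQ)
  have n2: "\<not> inQ' (r L)" unfolding rL by (rule r0_notQ')
  have ev1: "eventually (\<lambda>t. inQ (r t)) (at L within K)" using ev by (rule eventually_mono) simp
  have ev2: "eventually (\<lambda>t. inQ' (r t)) (at L within K)" using ev by (rule eventually_mono) simp
  have g1: "closed K \<and> K \<subseteq> {x. \<forall>i\<ge>(1::nat). x i = 0} \<and> finite D \<and>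
       (\<forall>t\<in>K. is_herm (r t) \<and> hsupp (r t) \<subseteq> D) \<and>
       (\<forall>\<alpha> \<beta>. continuous_on K (\<lambda>t. r t \<alpha> \<beta>)) \<and>
       L \<in> K \<and> L islimpt K \<and>
       eventually (\<lambda>t. inQ (r t)) (at L within K) \<and> \<not> inQ (r L)"
    using clK Ksub fD hr cont LK lim ev1 n1 by blast
  have g2: "closed K \<and> K \<subseteq> {x. \<forall>i\<ge>(1::nat). x i = 0} \<and> finite D \<and>
       (\<forall>t\<in>K. is_herm (r t) \<and> hsupp (r t) \<subseteq> D) \<and>
       (\<forall>\<alpha> \<beta>. continuous_on K (\<lambda>t. r t \<alpha> \<beta>)) \<and>
       L \<in> K \<and> L islimpt K \<and>
       eventually (\<lambda>t. inQ' (r t)) (at L within K) \<and> \<not> inQ' (r L)"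
    using clK Ksub fD hr cont LK lim ev2 n2 by blast
  have "not_closed_under_limits (inQ :: 'n hcoeffs \<Rightarrow> bool)"
    unfolding not_closed_under_limits_def by (rule exI[of _ 1], rule exI[of _ K], rule exI[of _ r],
        rule exI[of _ L], rule exI[of _ D]) (rule g1)
  moreover have "not_closed_under_limits (inQ' :: 'n hcoeffs \<Rightarrow> bool)"
    unfolding not_closed_under_limits_def by (rule exI[of _ 1], rule exI[of _ K], rule exI[of _ r],
        rule exI[of _ L], rule exI[of _ D]) (rule g2)
  ultimately show ?thesis ..
qed

theorem lemma2p4:
  shows "closed_under_sums (inQ :: ('n::finite) hcoeffs \<Rightarrow> bool) \<and>
         closed_under_products (inQ :: 'n hcoeffs \<Rightarrow> bool) \<and>
         not_closed_under_limits (inQ :: 'n hcoeffs \<Rightarrow> bool) \<and>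
         closed_under_products (inQ' :: 'n hcoeffs \<Rightarrow> bool) \<and>
         not_closed_under_limits (inQ' :: 'n hcoeffs \<Rightarrow> bool)"
proof -
  have "closed_under_sums (inQ :: 'n hcoeffs \<Rightarrow> bool)"
    unfolding closed_under_sums_def using Q_sum by blast
  moreover have "closed_under_products (inQ :: 'n hcoeffs \<Rightarrow> bool)"
    unfolding closed_under_products_def using Q_prod by blast
  moreover have "closed_under_products (inQ' :: 'n hcoeffs \<Rightarrow> bool)"
    unfolding closed_under_products_def using Q'_prod by blast
  moreover note family_ncl[where 'n='n]
  ultimately show ?thesis by blast
qed


end
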